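(* Let $1\le p\ne q<\infty$ and let $T\in B(\ell^p)$ and $S\in B(\ell^q)$ be invertible. Then $T$ and $S$ are equivalent after extension but are not equivalent after one-sided extension.
   Context: $\ell^p=\ell^p(\mathbb N)$ over $\mathbb C$; $B(X,Y)$ denotes bounded linear operators; invertibility means bounded inverse; $X\oplus Y$ is the $\ell^2$-direct sum and $\mathrm{id}_X$ the identity. Operators $T\in B(X)$ and $S\in B(Y)$ are equivalent after extension if there exist Banach spaces $X'$, $Y'$ and invertible $E\in B(Y\oplus Y',X\oplus X')$, $F\in B(X\oplus X',Y\oplus Y')$ with $\begin{bmatrix}T&0\\0&\mathrm{id}_{X'}\end{bmatrix}=E\begin{bmatrix}S&0\\0&\mathrm{id}_{Y'}\end{bmatrix}F$. They are equivalent after one-sided extension if this holds with one of $X'$ or $Y'$ equal to the trivial space $\{0\}$. *)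

theory Defs
  imports Complex_Main
begin

record 'a cnspace =
  space :: "'a set"
  vadd :: "'a \<Rightarrow> 'a \<Rightarrow> 'a"
  smul :: "complex \<Rightarrow> 'a \<Rightarrow> 'a"
  vzero :: 'a
  vnorm :: "'a \<Rightarrow> real"

definition vsub :: "'a cnspace \<Rightarrow> 'a \<Rightarrow> 'a \<Rightarrow> 'a" where
  "vsub X x y = vadd X x (smul X (-1) y)"

definition complex_banach :: "'a cnspace \<Rightarrow> bool" where
  "complex_banach X \<longleftrightarrow>
     vzero X \<in> space X \<and>
     (\<forall>x\<in>space X. \<forall>y\<in>space X. vadd X x y \<in> space X) \<and>
     (\<forall>c. \<forall>x\<in>space X. smul X c x \<in> space X) \<and>
     (\<forall>x\<in>space X. \<forall>y\<in>space X. \<forall>z\<in>space X.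
         vadd X (vadd X x y) z = vadd X x (vadd X y z)) \<and>
     (\<forall>x\<in>space X. \<forall>y\<in>space X. vadd X x y = vadd X y x) \<and>
     (\<forall>x\<in>space X. vadd X x (vzero X) = x) \<and>
     (\<forall>x\<in>space X. vadd X x (smul X (-1) x) = vzero X) \<and>
     (\<forall>x\<in>space X. smul X 1 x = x) \<and>
     (\<forall>a b. \<forall>x\<in>space X. smul X a (smul X b x) = smul X (a * b) x) \<and>
     (\<forall>a b. \<forall>x\<in>space X. smul X (a + b) x = vadd X (smul X a x) (smul X b x)) \<and>
     (\<forall>a. \<forall>x\<in>space X. \<forall>y\<in>space X.
         smul X a (vadd X x y) = vadd X (smul X a x) (smul X a y)) \<and>
     (\<forall>x\<in>space X. 0 \<le> vnorm X x) \<and>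
     (\<forall>x\<in>space X. vnorm X x = 0 \<longleftrightarrow> x = vzero X) \<and>
     (\<forall>c. \<forall>x\<in>space X. vnorm X (smul X c x) = cmod c * vnorm X x) \<and>
     (\<forall>x\<in>space X. \<forall>y\<in>space X. vnorm X (vadd X x y) \<le> vnorm X x + vnorm X y) \<and>
     (\<forall>u :: nat \<Rightarrow> 'a. (\<forall>n. u n \<in> space X) \<longrightarrow>
        (\<forall>e>0. \<exists>N. \<forall>m\<ge>N. \<forall>n\<ge>N. vnorm X (vsub X (u m) (u n)) < e) \<longrightarrow>
        (\<exists>l\<in>space X. \<forall>e>0. \<exists>N. \<forall>n\<ge>N. vnorm X (vsub X (u n) l) < e))"

definition bounded_op :: "'a cnspace \<Rightarrow> 'b cnspace \<Rightarrow> ('a \<Rightarrow> 'b) \<Rightarrow> bool" where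
  "bounded_op X Y f \<longleftrightarrow>
     (\<forall>x\<in>space X. f x \<in> space Y) \<and>
     (\<forall>x\<in>space X. \<forall>y\<in>space X. f (vadd X x y) = vadd Y (f x) (f y)) \<and>
     (\<forall>c. \<forall>x\<in>space X. f (smul X c x) = smul Y c (f x)) \<and>
     (\<exists>C. \<forall>x\<in>space X. vnorm Y (f x) \<le> C * vnorm X x)"

definition invertible_op :: "'a cnspace \<Rightarrow> 'b cnspace \<Rightarrow> ('a \<Rightarrow> 'b) \<Rightarrow> bool" where
  "invertible_op X Y f \<longleftrightarrow> bounded_op X Y f \<and>
     (\<exists>g. bounded_op Y X g \<and> (\<forall>x\<in>space X. g (f x) = x) \<and> (\<forall>y\<in>space Y. f (g y) = y))"

definition dsum :: "'a cnspace \<Rightarrow> 'b cnspace \<Rightarrow> ('a \<times> 'b) cnspace" where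
  "dsum X Y = \<lparr> space = space X \<times> space Y,
     vadd = (\<lambda>(x1, y1) (x2, y2). (vadd X x1 x2, vadd Y y1 y2)),
     smul = (\<lambda>c (x, y). (smul X c x, smul Y c y)),
     vzero = (vzero X, vzero Y),
     vnorm = (\<lambda>(x, y). sqrt ((vnorm X x)\<^sup>2 + (vnorm Y y)\<^sup>2)) \<rparr>"

definition trivial_space :: "'a cnspace" where
  "trivial_space = \<lparr> space = {undefined}, vadd = (\<lambda>_ _. undefined),
     smul = (\<lambda>_ _. undefined), vzero = undefined, vnorm = (\<lambda>_. 0) \<rparr>"

definition lp_space :: "real \<Rightarrow> (nat \<Rightarrow> complex) cnspace" where
  "lp_space p = \<lparr> space = {x. summable (\<lambda>n. cmod (x n) powr p)},
     vadd = (\<lambda>x y n. x n + y n),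
     smul = (\<lambda>c x n. c * x n),
     vzero = (\<lambda>n. 0),
     vnorm = (\<lambda>x. (\<Sum>n. cmod (x n) powr p) powr (1 / p)) \<rparr>"

text \<open>T in B(X), S in B(Y) satisfy [T 0; 0 id_X'] = E [S 0; 0 id_Y'] F
  for the given extension spaces X', Y'.\<close>

definition equiv_ext_with ::
  "'a cnspace \<Rightarrow> 'b cnspace \<Rightarrow> 'c cnspace \<Rightarrow> 'd cnspace
     \<Rightarrow> ('a \<Rightarrow> 'a) \<Rightarrow> ('b \<Rightarrow> 'b) \<Rightarrow> bool" where
  "equiv_ext_with X Y X' Y' T S \<longleftrightarrow>
     (\<exists>E F. invertible_op (dsum Y Y') (dsum X X') E \<and>
            invertible_op (dsum X X') (dsum Y Y') F \<and>
            (\<forall>z\<in>space (dsum X X').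
               (T (fst z), snd z) = E ((\<lambda>(y, y'). (S y, y')) (F z))))"

text \<open>Equivalence after extension, with the extension spaces X', Y' ranging
  over all complex Banach spaces carried by the types 'c and 'd.\<close>

definition equiv_after_ext ::
  "'c itself \<Rightarrow> 'd itself \<Rightarrow> 'a cnspace \<Rightarrow> 'b cnspace
     \<Rightarrow> ('a \<Rightarrow> 'a) \<Rightarrow> ('b \<Rightarrow> 'b) \<Rightarrow> bool" where
  "equiv_after_ext _ _ X Y T S \<longleftrightarrow>
     (\<exists>(X' :: 'c cnspace) (Y' :: 'd cnspace).
        complex_banach X' \<and> complex_banach Y' \<and> equiv_ext_with X Y X' Y' T S)"

definition equiv_after_one_sided_ext ::
  "'c itself \<Rightarrow> 'a cnspace \<Rightarrow> 'b cnspace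
     \<Rightarrow> ('a \<Rightarrow> 'a) \<Rightarrow> ('b \<Rightarrow> 'b) \<Rightarrow> bool" where
  "equiv_after_one_sided_ext _ X Y T S \<longleftrightarrow>
     (\<exists>X' :: 'c cnspace. complex_banach X' \<and>
         equiv_ext_with X Y X' (trivial_space :: 'c cnspace) T S) \<or>
     (\<exists>Y' :: 'c cnspace. complex_banach Y' \<and>
         equiv_ext_with X Y (trivial_space :: 'c cnspace) Y' T S)"

end

theory Submission
  imports Defs "HOL-Analysis.Convex" "HOL-Analysis.Function_Metric" "HOL-Analysis.Topology_Euclidean_Space"
begin


definition Ps :: "real \<Rightarrow> (nat \<Rightarrow> complex) \<Rightarrow> real" where
  "Ps s x = (\<Sum>n. cmod (x n) powr s)"
definition Ns :: "real \<Rightarrow> (nat \<Rightarrow> complex) \<Rightarrow> real" where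
  "Ns s x = Ps s x powr (1/s)"
definition Ls :: "real \<Rightarrow> (nat \<Rightarrow> complex) set" where
  "Ls s = {x. summable (\<lambda>n. cmod (x n) powr s)}"

lemma lp_simps: "space (lp_space s) = Ls s" "vnorm (lp_space s) = Ns s"
  "vadd (lp_space s) = (\<lambda>x y n. x n + y n)" "smul (lp_space s) = (\<lambda>c x n. c * x n)"
  "vzero (lp_space s) = (\<lambda>n. 0)"
  by (auto simp: lp_space_def Ls_def Ns_def Ps_def fun_eq_iff)

lemma Ps_nonneg: "x \<in> Ls s \<Longrightarrow> 0 \<le> Ps s x"
  unfolding Ps_def Ls_def by (auto intro!: suminf_nonneg)

lemma Ns_nonneg: "0 \<le> Ns s x"
  unfolding Ns_def by simp

lemma Ns_pow: "x \<in> Ls s \<Longrightarrow> s > 0 \<Longrightarrow> Ns s x powr s = Ps s x"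
  unfolding Ns_def using Ps_nonneg[of x s] by (simp add: powr_powr)

lemma Ns_le: "Ps s x \<le> K powr s \<Longrightarrow> x \<in> Ls s \<Longrightarrow> s > 0 \<Longrightarrow> K \<ge> 0 \<Longrightarrow> Ns s x \<le> K"
proof -
  assume a: "Ps s x \<le> K powr s" "x \<in> Ls s" "s > 0" "K \<ge> 0"
  have "Ns s x \<le> (K powr s) powr (1/s)" unfolding Ns_def
    by (rule powr_mono2) (use a Ps_nonneg in auto)
  also have "\<dots> = K" using a by (simp add: powr_powr)
  finally show ?thesis .
qed

lemma Ns_ge: "K powr s \<le> Ps s x \<Longrightarrow> x \<in> Ls s \<Longrightarrow> s > 0 \<Longrightarrow> K \<ge> 0 \<Longrightarrow> K \<le> Ns s x"
proof -
  assume a: "K powr s \<le> Ps s x" "x \<in> Ls s" "s > 0" "K \<ge> 0"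
  have "(K powr s) powr (1/s) \<le> Ns s x" unfolding Ns_def
    by (rule powr_mono2) (use a Ps_nonneg in auto)
  also have "(K powr s) powr (1/s) = K" using a by (simp add: powr_powr)
  finally show ?thesis .
qed

lemma Ps_zero_iff: "x \<in> Ls s \<Longrightarrow> Ps s x = 0 \<longleftrightarrow> x = (\<lambda>n. 0)"
  unfolding Ps_def Ls_def
  by (subst suminf_eq_zero_iff) (auto simp: fun_eq_iff)

lemma Ns_zero_iff: "x \<in> Ls s \<Longrightarrow> Ns s x = 0 \<longleftrightarrow> x = (\<lambda>n. 0)"
  unfolding Ns_def using Ps_zero_iff by simp

lemma coord_le_Ns: assumes "x \<in> Ls s" "s > 0" shows "cmod (x m) \<le> Ns s x"
proof -
  have "cmod (x m) powr s \<le> Ps s x" unfolding Ps_def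
    using assms unfolding Ls_def using sum_le_suminf[of "\<lambda>n. cmod (x n) powr s" "{m}"] by auto
  hence "(cmod (x m) powr s) powr (1/s) \<le> Ns s x" unfolding Ns_def
    using assms by (intro powr_mono2) auto
  thus ?thesis using assms by (simp add: powr_powr)
qed

lemma convex_pt:
  fixes a b t s :: real
  assumes "a \<ge> 0" "b \<ge> 0" "0 \<le> t" "t \<le> 1" "s \<ge> 1"
  shows "(t * a + (1 - t) * b) powr s \<le> t * a powr s + (1 - t) * b powr s"
proof -
  have c: "c powr s \<le> c" if "0 \<le> c" "c \<le> 1" for c :: real
  proof (cases "c = 0")
    case False
    then have "c powr s \<le> c powr 1" using that assms by (intro powr_mono') auto
    thus ?thesis using False that by simp
  qed simp
  show ?thesis
  proof (cases "a = 0")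
    case True
    have "((1 - t) * b) powr s = (1-t) powr s * b powr s" using assms by (simp add: powr_mult)
    also have "\<dots> \<le> (1 - t) * b powr s" using c[of "1-t"] assms by (intro mult_right_mono) auto
    finally show ?thesis using True assms by simp
  next
    case a: False
    show ?thesis
    proof (cases "b = 0")
      case True
      have "(t * a) powr s = t powr s * a powr s" using assms by (simp add: powr_mult)
      also have "\<dots> \<le> t * a powr s" using c[of t] assms by (intro mult_right_mono) auto
      finally show ?thesis using True assms by simp
    next
      case False
      have "convex_on {0<..} (\<lambda>x::real. x powr s)" using powr_convex assms by auto
      then show ?thesis using a False assms unfolding convex_on_def
        by (auto elim!: allE[of _ a] allE[of _ b] allE[of _ t])
    qed
  qed
qed

lemma zero_Ls[simp]: "(\<lambda>n. 0) \<in> Ls s"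
  unfolding Ls_def by simp

lemma minkowski:
  assumes s: "s \<ge> 1" and x: "x \<in> Ls s" and y: "y \<in> Ls s"
  shows "(\<lambda>n. x n + y n) \<in> Ls s \<and> Ns s (\<lambda>n. x n + y n) \<le> Ns s x + Ns s y"
proof (cases "Ns s x = 0 \<or> Ns s y = 0")
  case True
  then show ?thesis
  proof
    assume "Ns s x = 0" then have "x = (\<lambda>n. 0)" using Ns_zero_iff x by auto
    then show ?thesis using y by (simp add: Ns_nonneg)
  next
    assume "Ns s y = 0" then have "y = (\<lambda>n. 0)" using Ns_zero_iff y by auto
    then show ?thesis using x by (simp add: Ns_nonneg)
  qed
next
  case False
  define A where "A = Ns s x"
  define B where "B = Ns s y"
  have A: "A > 0" using False Ns_nonneg[of s x] unfolding A_def by linarith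
  have B: "B > 0" using False Ns_nonneg[of s y] unfolding B_def by linarith
  define t where "t = A / (A + B)"
  have t: "0 \<le> t" "t \<le> 1" using A B unfolding t_def by auto
  have t1: "1 - t = B / (A + B)" using A B unfolding t_def by (simp add: field_simps)
  define g where "g n = (A+B) powr s * ((t / A powr s) * cmod (x n) powr s + ((1-t) / B powr s) * cmod (y n) powr s)" for n
  have pt: "cmod (x n + y n) powr s \<le> g n" for n
  proof -
    have "cmod (x n + y n) \<le> cmod (x n) + cmod (y n)" by (rule norm_triangle_ineq)
    also have "\<dots> = (A+B) * (t * (cmod (x n) / A) + (1-t) * (cmod (y n) / B))"
    proof -
      have "(A+B) * (t * (cmod (x n) / A)) = cmod (x n)" unfolding t_def using A B by simp
      moreover have "(A+B) * ((1-t) * (cmod (y n) / B)) = cmod (y n)" unfolding t1 using A B by simp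
      ultimately show ?thesis by (simp add: distrib_left)
    qed
    finally have "cmod (x n + y n) powr s \<le> ((A+B) * (t * (cmod (x n) / A) + (1-t) * (cmod (y n) / B))) powr s"
      using s by (intro powr_mono2) auto
    also have "\<dots> = (A+B) powr s * (t * (cmod (x n) / A) + (1-t) * (cmod (y n) / B)) powr s"
      using A B t by (simp add: powr_mult)
    also have "\<dots> \<le> (A+B) powr s * (t * (cmod (x n) / A) powr s + (1-t) * (cmod (y n) / B) powr s)"
      using A B t s by (intro mult_left_mono convex_pt) auto
    also have "\<dots> = g n" unfolding g_def using A B by (simp add: powr_divide)
    finally show ?thesis .
  qed
  have sx: "summable (\<lambda>n. cmod (x n) powr s)" and sy: "summable (\<lambda>n. cmod (y n) powr s)"
    using x y unfolding Ls_def by auto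
  have gs: "g sums ((A+B) powr s * ((t / A powr s) * Ps s x + ((1-t) / B powr s) * Ps s y))"
    unfolding g_def Ps_def
    by (intro sums_mult sums_add sx sy summable_sums)
  have "Ps s x = A powr s" "Ps s y = B powr s" unfolding A_def B_def using Ns_pow x y s by auto
  then have gsum: "suminf g = (A+B) powr s" using gs A B
    by (simp add: sums_iff)
  have sg: "summable g" using gs by (simp add: sums_iff)
  have sxy: "summable (\<lambda>n. cmod (x n + y n) powr s)"
    by (rule summable_comparison_test[OF _ sg]) (use pt in auto)
  have "Ps s (\<lambda>n. x n + y n) \<le> suminf g" unfolding Ps_def
    by (rule suminf_le[OF _ sxy sg]) (use pt in auto)
  then have "Ns s (\<lambda>n. x n + y n) \<le> A + B"
    using sxy A B s by (intro Ns_le) (auto simp: gsum Ls_def)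
  then show ?thesis using sxy unfolding A_def B_def Ls_def by auto
qed

lemma smul_Ls:
  assumes "x \<in> Ls s" "s > 0"
  shows "(\<lambda>n. c * x n) \<in> Ls s" "Ps s (\<lambda>n. c * x n) = cmod c powr s * Ps s x"
    "Ns s (\<lambda>n. c * x n) = cmod c * Ns s x"
proof -
  have e: "cmod (c * x n) powr s = cmod c powr s * cmod (x n) powr s" for n
    by (simp add: norm_mult powr_mult)
  show 1: "(\<lambda>n. c * x n) \<in> Ls s" using assms unfolding Ls_def by (simp add: e summable_mult)
  show 2: "Ps s (\<lambda>n. c * x n) = cmod c powr s * Ps s x" using assms unfolding Ls_def Ps_def e
    by (simp add: suminf_mult)
  show "Ns s (\<lambda>n. c * x n) = cmod c * Ns s x" unfolding Ns_def 2 using assms Ps_nonneg[OF assms(1)]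
    by (simp add: powr_mult powr_powr)
qed

lemma neg_Ls: assumes "x \<in> Ls s" "s > 0"
  shows "(\<lambda>n. - x n) \<in> Ls s" "Ns s (\<lambda>n. - x n) = Ns s x"
  using smul_Ls[OF assms, of "-1"] by auto

lemma diff_Ls: assumes "s \<ge> 1" "x \<in> Ls s" "y \<in> Ls s"
  shows "(\<lambda>n. x n - y n) \<in> Ls s" "Ns s (\<lambda>n. x n - y n) \<le> Ns s x + Ns s y"
  using minkowski[OF assms(1,2) neg_Ls(1)[OF assms(3)]] neg_Ls(2)[OF assms(3)] assms by auto

lemma sum_Ls:
  fixes k :: nat
  assumes "s \<ge> 1" "\<And>i. i < k \<Longrightarrow> f i \<in> Ls s"
  shows "(\<lambda>m. \<Sum>i<k. f i m) \<in> Ls s \<and> Ns s (\<lambda>m. \<Sum>i<k. f i m) \<le> (\<Sum>i<k. Ns s (f i))"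
  using assms(2)
proof (induction k arbitrary: )
  case 0
  then show ?case by (simp add: Ns_def Ps_def)
next
  case (Suc k)
  then have ih: "(\<lambda>m. \<Sum>i<k. f i m) \<in> Ls s \<and> Ns s (\<lambda>m. \<Sum>i<k. f i m) \<le> (\<Sum>i<k. Ns s (f i))" by auto
  have "f k \<in> Ls s" using Suc by auto
  from minkowski[OF assms(1) conjunct1[OF ih] this] ih show ?case by auto
qed

lemma disj_Ps:
  assumes "x \<in> Ls s" "y \<in> Ls s" "\<And>m. x m = 0 \<or> y m = 0" "s > 0"
  shows "Ps s (\<lambda>n. x n + y n) = Ps s x + Ps s y"
proof -
  have "cmod (x n + y n) powr s = cmod (x n) powr s + cmod (y n) powr s" for n
    using assms(3)[of n] assms(4) by auto
  then show ?thesis using assms unfolding Ps_def Ls_def by (simp add: suminf_add)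
qed

lemma trunc_Ls:
  assumes "x \<in> Ls s" "s > 0"
  shows "(\<lambda>n. if Q n then x n else 0) \<in> Ls s" "Ps s (\<lambda>n. if Q n then x n else 0) \<le> Ps s x"
    "Ns s (\<lambda>n. if Q n then x n else 0) \<le> Ns s x"
proof -
  have le: "cmod (if Q n then x n else 0) powr s \<le> cmod (x n) powr s" for n by auto
  have sx: "summable (\<lambda>n. cmod (x n) powr s)" using assms unfolding Ls_def by auto
  show 1: "(\<lambda>n. if Q n then x n else 0) \<in> Ls s" unfolding Ls_def
    by (rule CollectI, rule summable_comparison_test'[OF sx, where N=0]) (simp add: le)
  show 2: "Ps s (\<lambda>n. if Q n then x n else 0) \<le> Ps s x" unfolding Ps_def
    using 1 sx unfolding Ls_def by (intro suminf_le) (auto simp: le)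
  show "Ns s (\<lambda>n. if Q n then x n else 0) \<le> Ns s x" unfolding Ns_def using 1 2 assms
    by (intro powr_mono2) (auto intro: Ps_nonneg)
qed

lemma trunc_split:
  assumes "x \<in> Ls s" "s > 0"
  shows "Ps s x = Ps s (\<lambda>n. if Q n then x n else 0) + Ps s (\<lambda>n. if Q n then 0 else x n)"
proof -
  have xe: "x = (\<lambda>n. (if Q n then x n else 0) + (if Q n then 0 else x n))" by auto
  have eq: "(\<lambda>n. if Q n then 0 else x n) = (\<lambda>n. if \<not> Q n then x n else 0)" by auto
  have "Ps s x = Ps s (\<lambda>n. (if Q n then x n else 0) + (if Q n then 0 else x n))" using xe by simp
  also have "\<dots> = Ps s (\<lambda>n. if Q n then x n else 0) + Ps s (\<lambda>n. if Q n then 0 else x n)"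
    using trunc_Ls(1)[OF assms, of Q] trunc_Ls(1)[OF assms, of "\<lambda>n. \<not> Q n"] assms
    by (intro disj_Ps[of "\<lambda>n. if Q n then x n else 0" s "\<lambda>n. if Q n then 0 else x n"]) (auto simp: eq)
  finally show ?thesis .
qed

lemma finsupp_Ls:
  assumes "\<And>n. n \<ge> M \<Longrightarrow> x n = 0" "s > 0"
  shows "x \<in> Ls s" "Ps s x = (\<Sum>n<M. cmod (x n) powr s)"
proof -
  have z: "\<And>n. n \<notin> {..<M} \<Longrightarrow> cmod (x n) powr s = 0" using assms by auto
  show "x \<in> Ls s" unfolding Ls_def using summable_finite[of "{..<M}", OF _ z] by auto
  show "Ps s x = (\<Sum>n<M. cmod (x n) powr s)" unfolding Ps_def using suminf_finite[of "{..<M}", OF _ z] by auto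
qed

lemma Ls_complete:
  fixes u :: "nat \<Rightarrow> nat \<Rightarrow> complex"
  assumes s: "s \<ge> 1" and u: "\<And>n. u n \<in> Ls s"
    and C: "\<And>e. e > 0 \<Longrightarrow> \<exists>N. \<forall>m\<ge>N. \<forall>n\<ge>N. Ns s (\<lambda>k. u m k - u n k) < e"
  shows "\<exists>l\<in>Ls s. \<forall>e>0. \<exists>N. \<forall>n\<ge>N. Ns s (\<lambda>k. u n k - l k) < e"
proof -
  have s0: "s > 0" using s by auto
  have du: "(\<lambda>k. u m k - u n k) \<in> Ls s" for m n using diff_Ls[OF s u u] by auto
  have "Cauchy (\<lambda>n. u n k)" for k
  proof (rule CauchyI)
    fix e :: real assume "e > 0"
    then obtain N where N: "\<forall>m\<ge>N. \<forall>n\<ge>N. Ns s (\<lambda>k. u m k - u n k) < e" using C by blast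
    show "\<exists>M. \<forall>m\<ge>M. \<forall>n\<ge>M. norm (u m k - u n k) < e"
    proof (intro exI[of _ N] allI impI)
      fix m n assume "m \<ge> N" "n \<ge> N"
      then have "Ns s (\<lambda>k. u m k - u n k) < e" using N by auto
      moreover have "cmod (u m k - u n k) \<le> Ns s (\<lambda>k. u m k - u n k)"
        using coord_le_Ns[OF du[of m n] s0, of k] by simp
      ultimately show "norm (u m k - u n k) < e" by simp
    qed
  qed
  then have conv: "\<And>k. (\<lambda>n. u n k) \<longlonglongrightarrow> lim (\<lambda>n. u n k)"
    by (simp add: Cauchy_convergent_iff convergent_LIMSEQ_iff)
  define l where "l k = lim (\<lambda>n. u n k)" for k
  have main: "\<exists>N. \<forall>m\<ge>N. (\<lambda>k. u m k - l k) \<in> Ls s \<and> Ns s (\<lambda>k. u m k - l k) < e" if e: "e > 0" for e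
  proof -
    obtain N where N: "\<forall>m\<ge>N. \<forall>n\<ge>N. Ns s (\<lambda>k. u m k - u n k) < e/2" using C[of "e/2"] e by auto
    have "(\<lambda>k. u m k - l k) \<in> Ls s \<and> Ns s (\<lambda>k. u m k - l k) < e" if m: "m \<ge> N" for m
    proof -
      have part: "(\<Sum>k<M. cmod (u m k - l k) powr s) \<le> (e/2) powr s" for M
      proof -
        have lim: "(\<lambda>n. \<Sum>k<M. cmod (u m k - u n k) powr s) \<longlonglongrightarrow> (\<Sum>k<M. cmod (u m k - l k) powr s)"
          unfolding l_def using s0
          by (intro tendsto_sum tendsto_powr2 tendsto_norm tendsto_diff tendsto_const conv) auto
        have "(\<Sum>k<M. cmod (u m k - u n k) powr s) \<le> (e/2) powr s" if n: "n \<ge> N" for n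
        proof -
          have "(\<Sum>k<M. cmod (u m k - u n k) powr s) \<le> Ps s (\<lambda>k. u m k - u n k)"
            unfolding Ps_def using du[of m n] unfolding Ls_def by (intro sum_le_suminf) auto
          also have "\<dots> = Ns s (\<lambda>k. u m k - u n k) powr s" using Ns_pow[OF du s0] by simp
          also have "\<dots> \<le> (e/2) powr s" using N m n s0
            by (intro powr_mono2) (auto simp: Ns_nonneg less_imp_le)
          finally show ?thesis .
        qed
        then show ?thesis by (intro LIMSEQ_le_const2[OF lim]) auto
      qed
      have sm: "summable (\<lambda>k. cmod (u m k - l k) powr s)"
      proof (rule bounded_imp_summable)
        show "(\<Sum>k\<le>n. cmod (u m k - l k) powr s) \<le> (e/2) powr s" for n
          using part[of "Suc n"] by (simp add: lessThan_Suc_atMost)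
      qed auto
      have "Ps s (\<lambda>k. u m k - l k) \<le> (e/2) powr s" unfolding Ps_def
        by (rule suminf_le_const[OF sm part])
      then have "Ns s (\<lambda>k. u m k - l k) \<le> e/2" using sm s0 e by (intro Ns_le) (auto simp: Ls_def)
      then show ?thesis using sm e by (auto simp: Ls_def)
    qed
    then show ?thesis by blast
  qed
  obtain N where "(\<lambda>k. u N k - l k) \<in> Ls s" using main[of 1] by auto
  from diff_Ls(1)[OF s u this] have "(\<lambda>k. u N k - (u N k - l k)) \<in> Ls s" .
  then have lL: "l \<in> Ls s" by simp
  show ?thesis using lL main by (intro bexI[of _ l]) force+
qed

lemma vsub_lp: "vsub (lp_space s) x y = (\<lambda>k. x k - y k)"
  unfolding vsub_def lp_simps by auto

lemma lp_banach: assumes s: "s \<ge> 1" shows "complex_banach (lp_space s)"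
proof -
  have s0: "s > 0" using s by auto
  have comp: "\<exists>l\<in>Ls s. \<forall>e>0. \<exists>N. \<forall>n\<ge>N. Ns s (\<lambda>k. u n k - l k) < e"
    if "\<forall>n. u n \<in> Ls s" "\<forall>e>0. \<exists>N. \<forall>m\<ge>N. \<forall>n\<ge>N. Ns s (\<lambda>k. u m k - u n k) < e" for u :: "nat \<Rightarrow> nat \<Rightarrow> complex"
    using Ls_complete[OF s, of u] that by blast
  show ?thesis
    unfolding complex_banach_def vsub_lp lp_simps
    using minkowski[OF s] smul_Ls[OF _ s0] Ns_nonneg Ns_zero_iff comp
    by (auto simp: algebra_simps fun_eq_iff)
qed



lemma sqrt_bound:
  fixes a b n1 n2 C1 C2 :: real
  assumes "0 \<le> a" "0 \<le> b" "0 \<le> n1" "0 \<le> n2" "a \<le> C1 * n2" "b \<le> C2 * n1"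
  shows "sqrt (a\<^sup>2 + b\<^sup>2) \<le> max \<bar>C1\<bar> \<bar>C2\<bar> * sqrt (n1\<^sup>2 + n2\<^sup>2)"
proof -
  define K where "K = max \<bar>C1\<bar> \<bar>C2\<bar>"
  have K: "K \<ge> 0" unfolding K_def by auto
  have "C1 * n2 \<le> K * n2" unfolding K_def using assms by (intro mult_right_mono) auto
  then have a: "a\<^sup>2 \<le> (K * n2)\<^sup>2" using assms by (intro power_mono) auto
  have "C2 * n1 \<le> K * n1" unfolding K_def using assms by (intro mult_right_mono) auto
  then have b: "b\<^sup>2 \<le> (K * n1)\<^sup>2" using assms by (intro power_mono) auto
  have "sqrt (a\<^sup>2 + b\<^sup>2) \<le> sqrt (K\<^sup>2 * (n1\<^sup>2 + n2\<^sup>2))"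
    using a b by (intro real_sqrt_le_mono) (simp add: power_mult_distrib algebra_simps)
  also have "\<dots> = K * sqrt (n1\<^sup>2 + n2\<^sup>2)" using K by (simp add: real_sqrt_mult)
  finally show ?thesis unfolding K_def .
qed

lemma cross_bounded:
  assumes f: "bounded_op X2 Y1 f" and g: "bounded_op X1 Y2 g"
    and nn: "\<And>x. 0 \<le> vnorm X1 x" "\<And>x. 0 \<le> vnorm X2 x" "\<And>x. 0 \<le> vnorm Y1 x" "\<And>x. 0 \<le> vnorm Y2 x"
  shows "bounded_op (Defs.dsum X1 X2) (Defs.dsum Y1 Y2) (\<lambda>(x1, x2). (f x2, g x1))"
proof -
  obtain C1 where C1: "\<forall>x\<in>space X2. vnorm Y1 (f x) \<le> C1 * vnorm X2 x" using f unfolding bounded_op_def by blast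
  obtain C2 where C2: "\<forall>x\<in>space X1. vnorm Y2 (g x) \<le> C2 * vnorm X1 x" using g unfolding bounded_op_def by blast
  have "\<forall>z\<in>space (Defs.dsum X1 X2). vnorm (Defs.dsum Y1 Y2) ((\<lambda>(x1, x2). (f x2, g x1)) z)
          \<le> max \<bar>C1\<bar> \<bar>C2\<bar> * vnorm (Defs.dsum X1 X2) z"
    unfolding Defs.dsum_def using C1 C2 nn by (auto intro!: sqrt_bound)
  then show ?thesis using f g unfolding bounded_op_def by (auto simp: Defs.dsum_def)
qed

lemma id_bounded: "bounded_op X X (\<lambda>x. x)"
  unfolding bounded_op_def by (auto intro!: exI[of _ 1])

lemma positive_part:
  assumes p: "1 \<le> p" and q: "1 \<le> q"
    and T: "invertible_op (lp_space p) (lp_space p) T"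
    and S: "invertible_op (lp_space q) (lp_space q) S"
  shows "equiv_ext_with (lp_space p) (lp_space q) (lp_space q) (lp_space p) T S"
proof -
  obtain Ti where Ti: "bounded_op (lp_space p) (lp_space p) Ti" "\<forall>x\<in>space (lp_space p). Ti (T x) = x"
    "\<forall>y\<in>space (lp_space p). T (Ti y) = y" using T unfolding invertible_op_def by blast
  obtain Si where Si: "bounded_op (lp_space q) (lp_space q) Si" "\<forall>x\<in>space (lp_space q). Si (S x) = x"
    "\<forall>y\<in>space (lp_space q). S (Si y) = y" using S unfolding invertible_op_def by blast
  have Tb: "bounded_op (lp_space p) (lp_space p) T" and Sb: "bounded_op (lp_space q) (lp_space q) S"
    using T S unfolding invertible_op_def by auto
  have nn: "\<And>x. 0 \<le> vnorm (lp_space s) x" for s by (simp add: lp_simps Ns_nonneg)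
  define E where "E = (\<lambda>(y::nat\<Rightarrow>complex, y'::nat\<Rightarrow>complex). (y', y))"
  define F where "F = (\<lambda>(x, x'). (Si x', T x))"
  define G where "G = (\<lambda>(y, y'). (Ti y', S y))"
  have E: "invertible_op (Defs.dsum (lp_space q) (lp_space p)) (Defs.dsum (lp_space p) (lp_space q)) E"
    unfolding invertible_op_def
  proof (intro conjI exI)
    show "bounded_op (Defs.dsum (lp_space q) (lp_space p)) (Defs.dsum (lp_space p) (lp_space q)) E"
      unfolding E_def by (rule cross_bounded[OF id_bounded id_bounded]) (auto simp: nn)
    show "bounded_op (Defs.dsum (lp_space p) (lp_space q)) (Defs.dsum (lp_space q) (lp_space p)) E"
      unfolding E_def by (rule cross_bounded[OF id_bounded id_bounded]) (auto simp: nn)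
  qed (auto simp: E_def)
  have Fb: "bounded_op (Defs.dsum (lp_space p) (lp_space q)) (Defs.dsum (lp_space q) (lp_space p)) F"
    unfolding F_def by (rule cross_bounded[OF Si(1) Tb]) (auto simp: nn)
  have Gb: "bounded_op (Defs.dsum (lp_space q) (lp_space p)) (Defs.dsum (lp_space p) (lp_space q)) G"
    unfolding G_def by (rule cross_bounded[OF Ti(1) Sb]) (auto simp: nn)
  have Tin: "T x \<in> space (lp_space p)" if "x \<in> space (lp_space p)" for x
    using Tb that unfolding bounded_op_def by auto
  have Sin: "S x \<in> space (lp_space q)" if "x \<in> space (lp_space q)" for x
    using Sb that unfolding bounded_op_def by auto
  have Tiin: "Ti x \<in> space (lp_space p)" if "x \<in> space (lp_space p)" for x
    using Ti(1) that unfolding bounded_op_def by auto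
  have Siin: "Si x \<in> space (lp_space q)" if "x \<in> space (lp_space q)" for x
    using Si(1) that unfolding bounded_op_def by auto
  have F: "invertible_op (Defs.dsum (lp_space p) (lp_space q)) (Defs.dsum (lp_space q) (lp_space p)) F"
    unfolding invertible_op_def using Fb Gb Ti Si
    by (intro conjI exI[of _ G]) (auto simp: F_def G_def Defs.dsum_def)
  have eq: "\<forall>z\<in>space (Defs.dsum (lp_space p) (lp_space q)).
      (T (fst z), snd z) = E ((\<lambda>(y, y'). (S y, y')) (F z))"
    using Si by (auto simp: E_def F_def Defs.dsum_def)
  show ?thesis unfolding equiv_ext_with_def using E F eq by blast
qed



lemma banach_zero:
  assumes Z: "complex_banach Z"
  shows "vzero Z \<in> space Z" "vadd Z (vzero Z) (vzero Z) = vzero Z" "smul Z c (vzero Z) = vzero Z"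
    "vnorm Z (vzero Z) = 0"
proof -
  show z: "vzero Z \<in> space Z" using Z unfolding complex_banach_def by auto
  show "vadd Z (vzero Z) (vzero Z) = vzero Z" using Z z unfolding complex_banach_def by auto
  show n: "vnorm Z (vzero Z) = 0" using Z z unfolding complex_banach_def by auto
  have "smul Z c (vzero Z) \<in> space Z" using Z z unfolding complex_banach_def by auto
  moreover have "vnorm Z (smul Z c (vzero Z)) = 0" using Z z n unfolding complex_banach_def by auto
  moreover have "\<forall>x\<in>space Z. (vnorm Z x = 0) = (x = vzero Z)" using Z unfolding complex_banach_def by auto
  ultimately show "smul Z c (vzero Z) = vzero Z" by blast
qed

lemma retract:
  assumes E: "invertible_op (Defs.dsum Y (trivial_space :: 'c cnspace)) (Defs.dsum X Z) E"
    and Z: "complex_banach (Z :: 'c cnspace)"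
    and nnX: "\<And>x. 0 \<le> vnorm X x" and nnY: "\<And>x. 0 \<le> vnorm Y x"
  shows "\<exists>A. (\<forall>x\<in>space X. A x \<in> space Y) \<and>
    (\<forall>x\<in>space X. \<forall>y\<in>space X. A (vadd X x y) = vadd Y (A x) (A y)) \<and>
    (\<forall>c. \<forall>x\<in>space X. A (smul X c x) = smul Y c (A x)) \<and>
    (\<exists>C. \<forall>x\<in>space X. vnorm Y (A x) \<le> C * vnorm X x) \<and>
    (\<exists>D. \<forall>x\<in>space X. vnorm X x \<le> D * vnorm Y (A x))"
proof -
  obtain g where g: "bounded_op (Defs.dsum X Z) (Defs.dsum Y trivial_space) g"
    "\<forall>x\<in>space (Defs.dsum Y trivial_space). g (E x) = x" "\<forall>y\<in>space (Defs.dsum X Z). E (g y) = y"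
    using E unfolding invertible_op_def by blast
  have Eb: "bounded_op (Defs.dsum Y trivial_space) (Defs.dsum X Z) E" using E unfolding invertible_op_def by auto
  note zz = banach_zero[OF Z]
  have sp1: "space (Defs.dsum X Z) = space X \<times> space Z" by (simp add: Defs.dsum_def)
  have sp2: "space (Defs.dsum Y (trivial_space :: 'c cnspace)) = space Y \<times> {undefined}"
    by (simp add: Defs.dsum_def trivial_space_def)
  have gmap: "\<forall>z\<in>space (Defs.dsum X Z). g z \<in> space (Defs.dsum Y trivial_space)"
    using g(1) unfolding bounded_op_def by blast
  have Emap: "\<forall>z\<in>space (Defs.dsum Y trivial_space). E z \<in> space (Defs.dsum X Z)"
    using Eb unfolding bounded_op_def by blast
  define A where "A x = fst (g (x, vzero Z))" for x
  have gin: "g (x, vzero Z) \<in> space Y \<times> {undefined}" if "x \<in> space X" for x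
  proof -
    have "(x, vzero Z) \<in> space (Defs.dsum X Z)" using that zz sp1 by simp
    then show ?thesis using gmap sp2 by blast
  qed
  have gA: "g (x, vzero Z) = (A x, undefined)" if "x \<in> space X" for x
  proof -
    obtain a b where "g (x, vzero Z) = (a, b)" by fastforce
    then show ?thesis using gin[OF that] unfolding A_def by auto
  qed
  have Ain: "\<forall>x\<in>space X. A x \<in> space Y" using gin unfolding A_def by force
  have add: "\<forall>x\<in>space X. \<forall>y\<in>space X. A (vadd X x y) = vadd Y (A x) (A y)"
  proof (intro ballI)
    fix x y assume xy: "x \<in> space X" "y \<in> space X"
    have addg: "\<forall>a\<in>space (Defs.dsum X Z). \<forall>b\<in>space (Defs.dsum X Z). g (vadd (Defs.dsum X Z) a b) = vadd (Defs.dsum Y trivial_space) (g a) (g b)"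
      using g(1) unfolding bounded_op_def by blast
    have "g (vadd (Defs.dsum X Z) (x, vzero Z) (y, vzero Z)) = vadd (Defs.dsum Y trivial_space) (g (x, vzero Z)) (g (y, vzero Z))"
      by (rule addg[rule_format]) (use xy zz sp1 in auto)
    moreover have "vadd (Defs.dsum X Z) (x, vzero Z) (y, vzero Z) = (vadd X x y, vzero Z)"
      using zz by (simp add: Defs.dsum_def)
    moreover have "vadd (Defs.dsum Y (trivial_space :: 'c cnspace)) (A x, undefined) (A y, undefined) = (vadd Y (A x) (A y), undefined)"
      by (simp add: Defs.dsum_def trivial_space_def)
    ultimately have "g (vadd X x y, vzero Z) = (vadd Y (A x) (A y), undefined)"
      using gA xy by simp
    then show "A (vadd X x y) = vadd Y (A x) (A y)" unfolding A_def by simp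
  qed
  have smul: "\<forall>c. \<forall>x\<in>space X. A (smul X c x) = smul Y c (A x)"
  proof (intro allI ballI)
    fix c x assume x: "x \<in> space X"
    have smg: "\<forall>c. \<forall>a\<in>space (Defs.dsum X Z). g (smul (Defs.dsum X Z) c a) = smul (Defs.dsum Y trivial_space) c (g a)"
      using g(1) unfolding bounded_op_def by blast
    have "g (smul (Defs.dsum X Z) c (x, vzero Z)) = smul (Defs.dsum Y trivial_space) c (g (x, vzero Z))"
      by (rule smg[rule_format]) (use x zz sp1 in auto)
    moreover have "smul (Defs.dsum X Z) c (x, vzero Z) = (smul X c x, vzero Z)"
      using zz by (simp add: Defs.dsum_def)
    moreover have "smul (Defs.dsum Y (trivial_space :: 'c cnspace)) c (A x, undefined) = (smul Y c (A x), undefined)"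
      by (simp add: Defs.dsum_def trivial_space_def)
    ultimately have "g (smul X c x, vzero Z) = (smul Y c (A x), undefined)"
      using gA x by simp
    then show "A (smul X c x) = smul Y c (A x)" unfolding A_def by simp
  qed
  obtain C where C: "\<forall>z\<in>space (Defs.dsum X Z). vnorm (Defs.dsum Y trivial_space) (g z) \<le> C * vnorm (Defs.dsum X Z) z"
    using g(1) unfolding bounded_op_def by blast
  obtain D where D: "\<forall>z\<in>space (Defs.dsum Y trivial_space). vnorm (Defs.dsum X Z) (E z) \<le> D * vnorm (Defs.dsum Y trivial_space) z"
    using Eb unfolding bounded_op_def by blast
  have nd1: "vnorm (Defs.dsum X Z) (x, vzero Z) = vnorm X x" for x
    using zz nnX[of x] by (simp add: Defs.dsum_def)
  have nd2: "vnorm (Defs.dsum Y (trivial_space :: 'c cnspace)) (y, u) = vnorm Y y" for y u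
    using nnY[of y] by (simp add: Defs.dsum_def trivial_space_def)
  have up: "\<forall>x\<in>space X. vnorm Y (A x) \<le> C * vnorm X x"
  proof
    fix x assume x: "x \<in> space X"
    have "(x, vzero Z) \<in> space (Defs.dsum X Z)" using x zz sp1 by simp
    then have "vnorm (Defs.dsum Y trivial_space) (g (x, vzero Z)) \<le> C * vnorm (Defs.dsum X Z) (x, vzero Z)"
      using C by blast
    then show "vnorm Y (A x) \<le> C * vnorm X x" unfolding gA[OF x] nd1 nd2 .
  qed
  have low: "\<forall>x\<in>space X. vnorm X x \<le> D * vnorm Y (A x)"
  proof
    fix x assume x: "x \<in> space X"
    have "(x, vzero Z) \<in> space (Defs.dsum X Z)" using x zz sp1 by simp
    then have e1: "E (A x, undefined) = (x, vzero Z)" using g(3) gA[OF x] by metis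
    have "(A x, undefined) \<in> space (Defs.dsum Y (trivial_space :: 'c cnspace))" using Ain x sp2 by simp
    then have "vnorm (Defs.dsum X Z) (E (A x, undefined)) \<le> D * vnorm (Defs.dsum Y (trivial_space :: 'c cnspace)) (A x, undefined :: 'c)"
      using D by blast
    then show "vnorm X x \<le> D * vnorm Y (A x)" unfolding e1 nd1 nd2 .
  qed
  show ?thesis using Ain add smul up low by blast
qed



lemma bounded_subseq:
  fixes y :: "nat \<Rightarrow> nat \<Rightarrow> complex"
  assumes B: "\<And>n m. cmod (y n m) \<le> B"
  shows "\<exists>\<sigma> l. strict_mono \<sigma> \<and> (\<forall>m. (\<lambda>k. y (\<sigma> k) m) \<longlonglongrightarrow> l m)"
proof -
  define K where "K = PiE (UNIV :: nat set) (\<lambda>_. cball (0::complex) B)"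
  have cb: "compact (cball (0::complex) B)" by (rule compact_cball)
  have "compactin (product_topology (\<lambda>_. euclidean) UNIV) K"
    unfolding K_def by (subst compactin_PiE) (use cb in auto)
  then have "compact K" unfolding euclidean_product_topology by simp
  then have "seq_compact K" by (rule compact_imp_seq_compact)
  moreover have "\<forall>n. y n \<in> K" unfolding K_def using B by auto
  ultimately obtain l \<sigma> where "strict_mono \<sigma>" "(y \<circ> \<sigma>) \<longlonglongrightarrow> l"
    unfolding seq_compact_def by metis
  moreover have "(\<lambda>k. y (\<sigma> k) m) \<longlonglongrightarrow> l m" if "(y \<circ> \<sigma>) \<longlonglongrightarrow> l" for m
  proof -
    have "continuous_on UNIV (\<lambda>x::nat\<Rightarrow>complex. x m)" by simp
    then have "isCont (\<lambda>x::nat\<Rightarrow>complex. x m) l" using continuous_on_eq_continuous_at[OF open_UNIV] by blast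
    from isCont_tendsto_compose[OF this that] show ?thesis by (simp add: o_def)
  qed
  ultimately show ?thesis by blast
qed

lemma tail_small:
  assumes f: "f \<in> Ls s" and s: "s \<ge> 1" and e: "e > 0"
  shows "\<exists>M\<ge>M0. Ns s (\<lambda>n. if M \<le> n then f n else 0) \<le> e"
proof -
  have sf: "summable (\<lambda>n. cmod (f n) powr s)" using f unfolding Ls_def by auto
  obtain N where N: "\<forall>n\<ge>N. norm (\<Sum>i. cmod (f (i + n)) powr s) < e powr s"
    using suminf_exist_split[OF _ sf, of "e powr s"] e by auto
  define M where "M = max N M0"
  have tl: "(\<lambda>n. if M \<le> n then f n else 0) \<in> Ls s" using trunc_Ls(1)[OF f] s by auto
  have "Ps s (\<lambda>n. if M \<le> n then f n else 0) = (\<Sum>i. cmod (if M \<le> i + M then f (i + M) else 0) powr s) + (\<Sum>i<M. cmod (if M \<le> i then f i else 0) powr s)"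
    unfolding Ps_def using tl unfolding Ls_def by (intro suminf_split_initial_segment) auto
  also have "\<dots> = (\<Sum>i. cmod (f (i + M)) powr s)" by simp
  also have "\<dots> \<le> e powr s" using N[rule_format, of M] unfolding M_def by auto
  finally have "Ns s (\<lambda>n. if M \<le> n then f n else 0) \<le> e" using tl s e by (intro Ns_le) auto
  then show ?thesis unfolding M_def by (intro exI[of _ "max N M0"]) auto
qed

lemma head_small:
  fixes w :: "nat \<Rightarrow> nat \<Rightarrow> complex"
  assumes w: "\<And>j. (\<lambda>k. w k j) \<longlonglongrightarrow> 0" and s: "s \<ge> 1" and e: "e > 0"
  shows "\<exists>k\<ge>K. Ns s (\<lambda>n. if n < m then w k n else 0) \<le> e"
proof -
  define \<eta> where "\<eta> = e / (real m + 1)"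
  have \<eta>: "\<eta> > 0" unfolding \<eta>_def using e by auto
  have "\<forall>j. eventually (\<lambda>k. cmod (w k j) < \<eta>) sequentially"
    using w \<eta> by (auto simp: tendsto_iff dist_norm)
  then have "eventually (\<lambda>k. \<forall>j\<in>{..<m}. cmod (w k j) < \<eta>) sequentially"
    by (intro eventually_ball_finite) auto
  then obtain N where N: "\<forall>k\<ge>N. \<forall>j<m. cmod (w k j) < \<eta>" by (auto simp: eventually_sequentially)
  define k where "k = max N K"
  have s0: "s > 0" using s by auto
  have hz: "\<And>n. n \<ge> m \<Longrightarrow> (if n < m then w k n else 0) = 0" by auto
  have "Ps s (\<lambda>n. if n < m then w k n else 0) = (\<Sum>n<m. cmod (if n < m then w k n else 0) powr s)"
    using finsupp_Ls(2)[OF hz s0] by simp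
  also have "\<dots> \<le> (\<Sum>n<m. \<eta> powr s)"
  proof (intro sum_mono powr_mono2)
    fix n assume "n \<in> {..<m}"
    then show "cmod (if n < m then w k n else 0) \<le> \<eta>" using N[rule_format, of k n] unfolding k_def by auto
  qed (use s0 in auto)
  also have "\<dots> = real m * \<eta> powr s" by simp
  also have "\<dots> \<le> (real m + 1) powr s * \<eta> powr s"
  proof (intro mult_right_mono)
    have "real m \<le> (real m + 1) powr 1" by simp
    also have "\<dots> \<le> (real m + 1) powr s" using s by (intro powr_mono) auto
    finally show "real m \<le> (real m + 1) powr s" .
  qed simp
  also have "\<dots> = e powr s" unfolding \<eta>_def using e by (simp add: powr_mult[symmetric])
  finally have "Ns s (\<lambda>n. if n < m then w k n else 0) \<le> e"
    using finsupp_Ls(1)[OF hz s0] s0 e by (intro Ns_le) auto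
  then show ?thesis unfolding k_def by (intro exI[of _ "max N K"]) auto
qed

lemma build_seq:
  fixes P :: "nat \<Rightarrow> nat \<Rightarrow> nat \<Rightarrow> nat \<Rightarrow> nat \<Rightarrow> bool"
  assumes st: "\<And>i k m. \<exists>k' m'. P i k m k' m'" and init: "Q k0 m0"
  shows "\<exists>kk mm. Q (kk 0) (mm 0) \<and> (\<forall>i. P i (kk i) (mm i) (kk (Suc i)) (mm (Suc i)))"
proof -
  define f where "f i k m = (SOME p. P i k m (fst p) (snd p))" for i k m
  have f: "P i k m (fst (f i k m)) (snd (f i k m))" for i k m
  proof -
    obtain k' m' where "P i k m k' m'" using st by blast
    then have "\<exists>p. P i k m (fst p) (snd p)" by (intro exI[of _ "(k', m')"]) simp
    then show ?thesis unfolding f_def by (rule someI_ex)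
  qed
  define g where "g = rec_nat (k0, m0) (\<lambda>i p. f i (fst p) (snd p))"
  have g0: "g 0 = (k0, m0)" and gS: "g (Suc i) = f i (fst (g i)) (snd (g i))" for i
    unfolding g_def by simp_all
  show ?thesis
    by (rule exI[of _ "\<lambda>i. fst (g i)"], rule exI[of _ "\<lambda>i. snd (g i)"]) (simp add: g0 gS f init)
qed

lemma final_real:
  fixes r s K1 K2 :: real
  assumes "0 < r" "r < s" and H: "\<And>n::nat. n \<ge> 1 \<Longrightarrow> real n powr (1/r) \<le> K1 * real n powr (1/s) + K2"
  shows False
proof -
  define \<alpha> where "\<alpha> = 1/r - 1/s"
  have \<alpha>: "\<alpha> > 0" unfolding \<alpha>_def using assms by (simp add: frac_less2)
  define L where "L = \<bar>K1\<bar> + \<bar>K2\<bar> + 1"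
  have L: "L \<ge> 1" unfolding L_def by auto
  define n :: nat where "n = nat \<lceil>L powr (1/\<alpha>)\<rceil>"
  have n1: "real n \<ge> L powr (1/\<alpha>)" unfolding n_def by linarith
  have "L powr (1/\<alpha>) \<ge> 1" using L \<alpha> by (simp add: ge_one_powr_ge_zero)
  then have nge: "real n \<ge> 1" using n1 by linarith
  then have nn: "n \<ge> 1" by simp
  have "L = (L powr (1/\<alpha>)) powr \<alpha>" using L \<alpha> by (simp add: powr_powr)
  also have "\<dots> \<le> real n powr \<alpha>" using n1 \<alpha> L by (intro powr_mono2) auto
  finally have La: "L \<le> real n powr \<alpha>" .
  have ns: "real n powr (1/s) \<ge> 1" using nge assms by (simp add: ge_one_powr_ge_zero)
  have "real n powr (1/r) = real n powr \<alpha> * real n powr (1/s)" unfolding \<alpha>_def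
    using nge by (simp add: powr_add[symmetric])
  also have "\<dots> \<ge> L * real n powr (1/s)" using La ns by (intro mult_right_mono) auto
  finally have "L * real n powr (1/s) \<le> real n powr (1/r)" .
  moreover have "K1 * real n powr (1/s) + K2 < L * real n powr (1/s)"
  proof -
    have "K1 * real n powr (1/s) \<le> \<bar>K1\<bar> * real n powr (1/s)" using ns by (intro mult_right_mono) auto
    moreover have "(\<bar>K2\<bar> + 1) * 1 \<le> (\<bar>K2\<bar> + 1) * real n powr (1/s)" using ns by (intro mult_left_mono) auto
    ultimately show ?thesis unfolding L_def by (simp add: algebra_simps)
  qed
  ultimately show False using H[OF nn] by linarith
qed



lemma unit_Ls: assumes "r > 0"
  shows "(\<lambda>n. if n = a then (1::complex) else 0) \<in> Ls r" "Ps r (\<lambda>n. if n = a then (1::complex) else 0) = 1"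
proof -
  have hz: "\<And>n. n \<ge> Suc a \<Longrightarrow> (if n = a then (1::complex) else 0) = 0" by auto
  show "(\<lambda>n. if n = a then (1::complex) else 0) \<in> Ls r" using finsupp_Ls(1)[OF hz assms] .
  have e: "(\<lambda>n. cmod (if n = a then (1::complex) else 0) powr r) = (\<lambda>n. if n = a then 1 else 0)"
    by (auto simp: fun_eq_iff)
  show "Ps r (\<lambda>n. if n = a then (1::complex) else 0) = 1" using finsupp_Ls(2)[OF hz assms] unfolding e by simp
qed

lemma no_embed:
  fixes A :: "(nat \<Rightarrow> complex) \<Rightarrow> (nat \<Rightarrow> complex)"
  assumes r: "1 \<le> r" and s: "1 \<le> s" and rs: "r \<noteq> s"
    and Ain: "\<forall>x\<in>Ls r. A x \<in> Ls s"
    and add: "\<forall>x\<in>Ls r. \<forall>y\<in>Ls r. A (\<lambda>n. x n + y n) = (\<lambda>n. A x n + A y n)"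
    and sm: "\<forall>c. \<forall>x\<in>Ls r. A (\<lambda>n. c * x n) = (\<lambda>n. c * A x n)"
    and up: "\<forall>x\<in>Ls r. Ns s (A x) \<le> C * Ns r x"
    and low: "\<forall>x\<in>Ls r. Ns r x \<le> D * Ns s (A x)"
  shows False
proof -
  have r0: "r > 0" and s0: "s > 0" using r s by auto
  define e where "e a = (\<lambda>n::nat. if n = a then (1::complex) else 0)" for a :: nat
  have eL: "e a \<in> Ls r" for a unfolding e_def using unit_Ls[OF r0] by auto
  have Pe: "Ps r (e a) = 1" for a unfolding e_def using unit_Ls[OF r0] by auto
  have Ne: "Ns r (e a) = 1" for a unfolding Ns_def Pe by simp
  have Adiff: "A (\<lambda>n. x n - y n) = (\<lambda>n. A x n - A y n)" if "x \<in> Ls r" "y \<in> Ls r" for x y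
  proof -
    have my: "(\<lambda>n. (-1) * y n) \<in> Ls r" using smul_Ls(1)[OF that(2) r0] .
    have 1: "A (\<lambda>n. x n + (\<lambda>n. (-1) * y n) n) = (\<lambda>n. A x n + A (\<lambda>n. (-1) * y n) n)"
      by (rule add[rule_format, OF that(1) my])
    have 2: "A (\<lambda>n. (-1) * y n) = (\<lambda>n. (-1) * A y n)" by (rule sm[rule_format, OF that(2)])
    from 1 2 show ?thesis by simp
  qed
  have Asum: "A (\<lambda>m. \<Sum>i<k. f i m) = (\<lambda>m. \<Sum>i<k. A (f i) m)" if "\<forall>i. f i \<in> Ls r" for f and k :: nat
  proof (induction k)
    case 0
    have "A (\<lambda>n. 0 * (\<lambda>n. (0::complex)) n) = (\<lambda>n. 0 * A (\<lambda>n. 0) n)" by (rule sm[rule_format]) simp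
    then show ?case by simp
  next
    case (Suc k)
    have sL: "(\<lambda>m. \<Sum>i<k. f i m) \<in> Ls r" using sum_Ls[OF r, of k f] that by auto
    have "A (\<lambda>m. \<Sum>i<Suc k. f i m) = A (\<lambda>m. (\<lambda>m. \<Sum>i<k. f i m) m + f k m)" by simp
    also have "\<dots> = (\<lambda>m. A (\<lambda>m. \<Sum>i<k. f i m) m + A (f k) m)" using add[rule_format, OF sL, of "f k"] that by simp
    finally show ?case using Suc by simp
  qed
  have D0: "D > 0"
  proof (rule ccontr)
    assume "\<not> D > 0"
    then have "D * Ns s (A (e 0)) \<le> 0" using Ns_nonneg[of s "A (e 0)"] by (simp add: mult_nonpos_nonneg)
    then show False using low eL[of 0] Ne[of 0] by force
  qed
  have coordB: "cmod (A (e a) m) \<le> C" for a m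
  proof -
    have "cmod (A (e a) m) \<le> Ns s (A (e a))" using coord_le_Ns[OF _ s0] Ain eL by blast
    also have "\<dots> \<le> C" using up eL[of a] Ne[of a] by force
    finally show ?thesis .
  qed
  obtain \<sigma> l where \<sigma>: "strict_mono \<sigma>" and lim: "\<And>m. (\<lambda>k. A (e (\<sigma> k)) m) \<longlonglongrightarrow> l m"
    using bounded_subseq[of "\<lambda>n m. A (e n) m" C] coordB by blast
  define z where "z k = (\<lambda>n. e (\<sigma> (2*k)) n - e (\<sigma> (2*k+1)) n)" for k
  define w where "w k = A (z k)" for k
  have zL: "z k \<in> Ls r" for k unfolding z_def using diff_Ls(1)[OF r eL eL] .
  have wL: "w k \<in> Ls s" for k unfolding w_def using Ain zL by blast
  have wdef: "w k = (\<lambda>m. A (e (\<sigma> (2*k))) m - A (e (\<sigma> (2*k+1))) m)" for k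
    unfolding w_def z_def using Adiff eL by blast
  have wlim: "(\<lambda>k. w k j) \<longlonglongrightarrow> 0" for j
  proof -
    have m2: "strict_mono (\<lambda>k::nat. 2*k)" "strict_mono (\<lambda>k::nat. 2*k+1)" by (auto simp: strict_mono_def)
    have "(\<lambda>k. A (e (\<sigma> (2*k))) j) \<longlonglongrightarrow> l j"
      using LIMSEQ_subseq_LIMSEQ[OF lim m2(1)] by (simp add: o_def)
    moreover have "(\<lambda>k. A (e (\<sigma> (2*k+1))) j) \<longlonglongrightarrow> l j"
      using LIMSEQ_subseq_LIMSEQ[OF lim m2(2)] by (simp add: o_def)
    ultimately have "(\<lambda>k. A (e (\<sigma> (2*k))) j - A (e (\<sigma> (2*k+1))) j) \<longlonglongrightarrow> l j - l j"
      by (rule tendsto_diff)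
    then show ?thesis unfolding wdef by simp
  qed
  have zsupp: "z k m \<noteq> 0 \<Longrightarrow> m = \<sigma> (2*k) \<or> m = \<sigma> (2*k+1)" for k m
    unfolding z_def e_def by (auto split: if_splits)
  have Pz: "Ps r (z k) = 2" for k
  proof -
    have "\<sigma> (2*k) < \<sigma> (2*k+1)" using \<sigma> by (simp add: strict_mono_less)
    then have ne: "\<sigma> (2*k) \<noteq> \<sigma> (2*k+1)" by simp
    have mL: "(\<lambda>n. (-1) * e (\<sigma> (2*k+1)) n) \<in> Ls r" using smul_Ls(1)[OF eL r0] .
    have zeq: "z k = (\<lambda>n. e (\<sigma> (2*k)) n + (\<lambda>n. (-1) * e (\<sigma> (2*k+1)) n) n)" unfolding z_def by simp
    have dj: "Ps r (\<lambda>n. e (\<sigma> (2*k)) n + (\<lambda>n. (-1) * e (\<sigma> (2*k+1)) n) n) = Ps r (e (\<sigma> (2*k))) + Ps r (\<lambda>n. (-1) * e (\<sigma> (2*k+1)) n)"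
      by (rule disj_Ps[OF eL mL _ r0]) (use ne in \<open>simp add: e_def\<close>)
    have "Ps r (z k) = Ps r (e (\<sigma> (2*k))) + Ps r (\<lambda>n. (-1) * e (\<sigma> (2*k+1)) n)"
      by (subst zeq, rule dj)
    also have "\<dots> = 2" using smul_Ls(2)[OF eL r0, of "-1"] Pe by simp
    finally show ?thesis .
  qed
  have Nz: "Ns r (z k) = 2 powr (1/r)" for k unfolding Ns_def Pz ..
  define aW where "aW = 2 powr (1/r) / D"
  define bW where "bW = C * 2 powr (1/r)"
  have aW: "aW > 0" unfolding aW_def using D0 by auto
  have wup: "Ns s (w k) \<le> bW" for k unfolding bW_def w_def using up zL[of k] Nz[of k] by auto
  have wlow: "aW \<le> Ns s (w k)" for k
  proof -
    have "2 powr (1/r) \<le> D * Ns s (w k)" using low zL[of k] Nz[of k] unfolding w_def by auto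
    then show ?thesis unfolding aW_def using D0 by (simp add: divide_le_eq mult.commute)
  qed
  define \<eta> where "\<eta> = min 1 aW"
  have \<eta>: "\<eta> > 0" "\<eta> \<le> 1" "\<eta> \<le> aW" unfolding \<eta>_def using aW by auto
  define \<epsilon> where "\<epsilon> i = \<eta> / 2 ^ (i+2)" for i :: nat
  have \<epsilon>pos: "\<epsilon> i > 0" for i unfolding \<epsilon>_def using \<eta> by auto
  have \<epsilon>small: "2 * \<epsilon> i \<le> aW / 2" for i
  proof -
    have "(4::real) \<le> 2 ^ (i+2)" by (simp add: power_add)
    then have "\<eta> / 2 ^ (i+2) \<le> \<eta> / 4" using \<eta> by (intro divide_left_mono) auto
    then show ?thesis unfolding \<epsilon>_def using \<eta> by simp
  qed
  have \<epsilon>sum: "(\<Sum>i<n. 2 * \<epsilon> i) \<le> 1" for n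
  proof -
    have "(\<Sum>i<n. 2 * \<epsilon> i) = \<eta> / 2 * (\<Sum>i<n. (1/2::real) ^ i)"
      unfolding \<epsilon>_def sum_distrib_left by (intro sum.cong) (auto simp: power_add field_simps)
    also have "(\<Sum>i<n. (1/2::real) ^ i) = 2 * (1 - (1/2)^n)" by (subst sum_gp_strict) auto
    also have "\<eta> / 2 * (2 * (1 - (1/2::real)^n)) \<le> \<eta> / 2 * 2"
      using \<eta> by (intro mult_left_mono) auto
    finally show ?thesis using \<eta> by simp
  qed
  define Q where "Q k0 m0 \<longleftrightarrow> Ns s (\<lambda>n. if m0 \<le> n then w k0 n else 0) \<le> \<epsilon> 0" for k0 m0
  define P where "P i k m k' m' \<longleftrightarrow> k < k' \<and> m < m' \<and> Ns s (\<lambda>n. if n < m then w k' n else 0) \<le> \<epsilon> (Suc i)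
      \<and> Ns s (\<lambda>n. if m' \<le> n then w k' n else 0) \<le> \<epsilon> (Suc i)" for i k m k' m'
  obtain m0 where "Q 0 m0" unfolding Q_def using tail_small[OF wL s \<epsilon>pos, of 0 0 0] by auto
  moreover have "\<exists>k' m'. P i k m k' m'" for i k m
  proof -
    obtain k' where k': "k' \<ge> Suc k" "Ns s (\<lambda>n. if n < m then w k' n else 0) \<le> \<epsilon> (Suc i)"
      using head_small[of w, OF wlim s \<epsilon>pos[of "Suc i"], of "Suc k" m] by blast
    obtain m' where m': "m' \<ge> Suc m" "Ns s (\<lambda>n. if m' \<le> n then w k' n else 0) \<le> \<epsilon> (Suc i)"
      using tail_small[OF wL[of k'] s \<epsilon>pos[of "Suc i"], of "Suc m"] by blast
    show ?thesis unfolding P_def using k' m' by (intro exI[of _ k'] exI[of _ m']) auto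
  qed
  ultimately obtain kk mm where kk0: "Q (kk 0) (mm 0)" and kkS: "\<And>i. P i (kk i) (mm i) (kk (Suc i)) (mm (Suc i))"
    using build_seq[of P Q 0 m0] by blast
  have kkm: "strict_mono kk" unfolding strict_mono_Suc_iff using kkS by (auto simp: P_def)
  have mmm: "strict_mono mm" unfolding strict_mono_Suc_iff using kkS by (auto simp: P_def)
  define lo where "lo i = (case i of 0 \<Rightarrow> 0 | Suc j \<Rightarrow> mm j)" for i
  have head: "Ns s (\<lambda>n. if n < lo i then w (kk i) n else 0) \<le> \<epsilon> i" for i
  proof (cases i)
    case 0
    then show ?thesis using \<epsilon>pos[of i] by (simp add: lo_def Ns_def Ps_def)
  next
    case (Suc j)
    then show ?thesis using kkS[of j] unfolding Suc by (simp add: lo_def P_def)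
  qed
  have tail: "Ns s (\<lambda>n. if mm i \<le> n then w (kk i) n else 0) \<le> \<epsilon> i" for i
  proof (cases i)
    case 0
    then show ?thesis using kk0 unfolding 0 by (simp add: Q_def)
  next
    case (Suc j)
    then show ?thesis using kkS[of j] unfolding Suc by (simp add: P_def)
  qed
  have lo_le: "lo i \<le> mm i" for i
    by (cases i) (auto simp: lo_def strict_mono_less_eq[OF mmm])
  have lo_mono: "mm i \<le> lo n" if "i < n" for i n
    using that by (cases n) (auto simp: lo_def strict_mono_less_eq[OF mmm])
  define u where "u i = (\<lambda>n. if lo i \<le> n \<and> n < mm i then w (kk i) n else 0)" for i
  have uL: "u i \<in> Ls s" for i unfolding u_def using trunc_Ls(1)[OF wL s0] .
  have dL: "(\<lambda>n. w (kk i) n - u i n) \<in> Ls s" for i using diff_Ls(1)[OF s wL uL] .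
  have Nd: "Ns s (\<lambda>n. w (kk i) n - u i n) \<le> 2 * \<epsilon> i" for i
  proof -
    have dsplit: "(\<lambda>n. w (kk i) n - u i n) = (\<lambda>n. (if n < lo i then w (kk i) n else 0) + (if mm i \<le> n then w (kk i) n else 0))"
      using lo_le[of i] by (auto simp: u_def fun_eq_iff)
    have "Ns s (\<lambda>n. (if n < lo i then w (kk i) n else 0) + (if mm i \<le> n then w (kk i) n else 0))
        \<le> Ns s (\<lambda>n. if n < lo i then w (kk i) n else 0) + Ns s (\<lambda>n. if mm i \<le> n then w (kk i) n else 0)"
      using minkowski[OF s trunc_Ls(1)[OF wL[of "kk i"] s0, of "\<lambda>n. n < lo i"] trunc_Ls(1)[OF wL[of "kk i"] s0, of "\<lambda>n. mm i \<le> n"]] by blast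
    also have "\<dots> \<le> 2 * \<epsilon> i" using head[of i] tail[of i] by simp
    finally show ?thesis unfolding dsplit .
  qed
  have Nu_up: "Ns s (u i) \<le> bW" for i
    using trunc_Ls(3)[OF wL s0] wup unfolding u_def by (meson order_trans)
  have Nu_low: "aW / 2 \<le> Ns s (u i)" for i
  proof -
    have "w (kk i) = (\<lambda>n. u i n + (\<lambda>n. w (kk i) n - u i n) n)" by simp
    then have "Ns s (w (kk i)) \<le> Ns s (u i) + Ns s (\<lambda>n. w (kk i) n - u i n)"
      using minkowski[OF s uL dL, of i i] by simp
    then show ?thesis using wlow[of "kk i"] Nd[of i] \<epsilon>small[of i] by linarith
  qed
  define X where "X n = (\<lambda>m. \<Sum>i<n. z (kk i) m)" for n
  have XL: "X n \<in> Ls r" for n unfolding X_def using sum_Ls[OF r, of n "\<lambda>i. z (kk i)"] zL by blast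
  have Xdisj: "X n m = 0 \<or> z (kk n) m = 0" for n m
  proof (rule ccontr)
    assume "\<not> (X n m = 0 \<or> z (kk n) m = 0)"
    then have a: "X n m \<noteq> 0" and b: "z (kk n) m \<noteq> 0" by auto
    from a obtain i where i: "i < n" "z (kk i) m \<noteq> 0" unfolding X_def
      by (metis (mono_tags, lifting) lessThan_iff sum.neutral)
    have "kk i < kk n" using i kkm by (simp add: strict_mono_less)
    then have lt: "2 * kk i + 1 < 2 * kk n" by simp
    have "\<sigma> (2 * kk i) < \<sigma> (2 * kk n)" "\<sigma> (2 * kk i + 1) < \<sigma> (2 * kk n)"
      "\<sigma> (2 * kk i) < \<sigma> (2 * kk n + 1)" "\<sigma> (2 * kk i + 1) < \<sigma> (2 * kk n + 1)"
      using lt \<sigma> by (simp_all add: strict_mono_less)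
    then show False using zsupp[OF b] zsupp[OF i(2)] by auto
  qed
  have PX: "Ps r (X n) = 2 * real n" for n
  proof (induction n)
    case 0
    then show ?case by (simp add: X_def Ps_def)
  next
    case (Suc n)
    have "X (Suc n) = (\<lambda>m. X n m + z (kk n) m)" unfolding X_def by simp
    then have "Ps r (X (Suc n)) = Ps r (X n) + Ps r (z (kk n))"
      using disj_Ps[OF XL zL Xdisj r0] by simp
    then show ?case using Suc Pz by simp
  qed
  have NX: "Ns r (X n) = (2 * real n) powr (1/r)" for n unfolding Ns_def PX ..
  have AX: "A (X n) = (\<lambda>m. \<Sum>i<n. w (kk i) m)" for n
    unfolding X_def w_def using Asum[of "\<lambda>i. z (kk i)"] zL by blast
  define U where "U n = (\<lambda>m. \<Sum>i<n. u i m)" for n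
  have UL: "U n \<in> Ls s" for n unfolding U_def using sum_Ls[OF s, of n u] uL by blast
  have Udisj: "U n m = 0 \<or> u n m = 0" for n m
  proof (cases "u n m = 0")
    case False
    then have "lo n \<le> m" unfolding u_def by (auto split: if_splits)
    then have "u i m = 0" if "i < n" for i
      using lo_mono[OF that] unfolding u_def by auto
    then show ?thesis unfolding U_def by simp
  qed simp
  have PU: "Ps s (U n) = (\<Sum>i<n. Ps s (u i))" for n
  proof (induction n)
    case 0
    then show ?case by (simp add: U_def Ps_def)
  next
    case (Suc n)
    have "U (Suc n) = (\<lambda>m. U n m + u n m)" unfolding U_def by simp
    then have "Ps s (U (Suc n)) = Ps s (U n) + Ps s (u n)"
      using disj_Ps[OF UL uL Udisj s0] by simp
    then show ?case using Suc by simp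
  qed
  have bW0: "bW \<ge> 0" using Nu_up[of 0] Ns_nonneg[of s "u 0"] by linarith
  have PUlow: "real n * (aW/2) powr s \<le> Ps s (U n)" for n
  proof -
    have "(aW/2) powr s \<le> Ps s (u i)" for i
      using Ns_pow[OF uL s0, of i] Nu_low[of i] aW s0 by (metis powr_mono2 less_imp_le half_gt_zero)
    then have "(\<Sum>i<n. (aW/2) powr s) \<le> (\<Sum>i<n. Ps s (u i))" by (intro sum_mono) auto
    then show ?thesis using PU by simp
  qed
  have PUup: "Ps s (U n) \<le> real n * bW powr s" for n
  proof -
    have "Ps s (u i) \<le> bW powr s" for i
      using Ns_pow[OF uL s0, of i] Nu_up[of i] s0 Ns_nonneg[of s "u i"] by (metis powr_mono2 less_imp_le)
    then have "(\<Sum>i<n. Ps s (u i)) \<le> (\<Sum>i<n. bW powr s)" by (intro sum_mono) auto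
    then show ?thesis using PU by simp
  qed
  have NUlow: "real n powr (1/s) * (aW/2) \<le> Ns s (U n)" for n
  proof (rule Ns_ge[OF _ UL s0])
    have "(real n powr (1/s) * (aW/2)) powr s = (real n powr (1/s)) powr s * (aW/2) powr s"
      by (rule powr_mult)
    also have "(real n powr (1/s)) powr s = real n" using s0 by (simp add: powr_powr)
    finally have "(real n powr (1/s) * (aW/2)) powr s = real n * (aW/2) powr s" .
    then show "(real n powr (1/s) * (aW/2)) powr s \<le> Ps s (U n)" using PUlow by simp
  qed (use aW in auto)
  have NUup: "Ns s (U n) \<le> real n powr (1/s) * bW" for n
  proof (rule Ns_le[OF _ UL s0])
    have "(real n powr (1/s) * bW) powr s = (real n powr (1/s)) powr s * bW powr s"
      by (rule powr_mult)
    also have "(real n powr (1/s)) powr s = real n" using s0 by (simp add: powr_powr)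
    finally have "(real n powr (1/s) * bW) powr s = real n * bW powr s" .
    then show "Ps s (U n) \<le> (real n powr (1/s) * bW) powr s" using PUup by simp
  qed (use bW0 in auto)
  define R where "R n = (\<lambda>m. A (X n) m - U n m)" for n
  have Req: "R n = (\<lambda>m. \<Sum>i<n. (\<lambda>m. w (kk i) m - u i m) m)" for n
    unfolding R_def AX U_def by (simp add: sum_subtractf)
  have RL: "R n \<in> Ls s" and NR: "Ns s (R n) \<le> 1" for n
  proof -
    have "(\<lambda>m. \<Sum>i<n. (\<lambda>m. w (kk i) m - u i m) m) \<in> Ls s \<and>
      Ns s (\<lambda>m. \<Sum>i<n. (\<lambda>m. w (kk i) m - u i m) m) \<le> (\<Sum>i<n. Ns s (\<lambda>m. w (kk i) m - u i m))"
      by (rule sum_Ls[OF s]) (use dL in auto)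
    moreover have "(\<Sum>i<n. Ns s (\<lambda>m. w (kk i) m - u i m)) \<le> (\<Sum>i<n. 2 * \<epsilon> i)"
      by (intro sum_mono Nd)
    ultimately show "R n \<in> Ls s" "Ns s (R n) \<le> 1" unfolding Req using \<epsilon>sum[of n] by auto
  qed
  have AXL: "A (X n) \<in> Ls s" for n using Ain XL by blast
  have I1: "Ns s (A (X n)) \<le> Ns s (U n) + 1" for n
  proof -
    have "A (X n) = (\<lambda>m. U n m + R n m)" unfolding R_def by simp
    then have "Ns s (A (X n)) \<le> Ns s (U n) + Ns s (R n)" using minkowski[OF s UL RL, of n n] by simp
    then show ?thesis using NR[of n] by simp
  qed
  have I2: "Ns s (U n) \<le> Ns s (A (X n)) + 1" for n
  proof -
    have "U n = (\<lambda>m. A (X n) m - R n m)" unfolding R_def by simp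
    then have "Ns s (U n) \<le> Ns s (A (X n)) + Ns s (R n)" using diff_Ls(2)[OF s AXL RL, of n n] by simp
    then show ?thesis using NR[of n] by simp
  qed
  have two: "(2 * real n) powr (1/r) = 2 powr (1/r) * real n powr (1/r)" for n by (simp add: powr_mult)
  have two1: "1 \<le> 2 powr (1/r)" using r0 by (simp add: ge_one_powr_ge_zero)
  have F1: "real n powr (1/r) \<le> (D * bW) * real n powr (1/s) + D" if "n \<ge> 1" for n :: nat
  proof -
    have "real n powr (1/r) \<le> (2 * real n) powr (1/r)" unfolding two using two1
      by (simp add: mult_le_cancel_right1)
    also have "\<dots> \<le> D * Ns s (A (X n))" using low XL[of n] NX[of n] by auto
    also have "\<dots> \<le> D * (real n powr (1/s) * bW + 1)" using I1[of n] NUup[of n] D0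
      by (intro mult_left_mono) auto
    finally show ?thesis by (simp add: algebra_simps)
  qed
  have F2: "real n powr (1/s) \<le> (2 / aW * C * 2 powr (1/r)) * real n powr (1/r) + 2 / aW" if "n \<ge> 1" for n :: nat
  proof -
    have "real n powr (1/s) * (aW/2) \<le> Ns s (A (X n)) + 1" using NUlow[of n] I2[of n] by linarith
    also have "Ns s (A (X n)) \<le> C * (2 * real n) powr (1/r)" using up XL[of n] NX[of n] by auto
    finally have "real n powr (1/s) * (aW/2) \<le> C * 2 powr (1/r) * real n powr (1/r) + 1"
      unfolding two by (simp add: algebra_simps)
    then have "real n powr (1/s) \<le> (C * 2 powr (1/r) * real n powr (1/r) + 1) / (aW/2)"
      using aW by (simp add: le_divide_eq)
    also have "(C * 2 powr (1/r) * real n powr (1/r) + 1) / (aW/2) = (2 / aW * C * 2 powr (1/r)) * real n powr (1/r) + 2 / aW"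
      using aW by (simp add: field_simps)
    finally show ?thesis .
  qed
  show False
  proof (cases "r < s")
    case True
    show False by (rule final_real[OF r0 True F1])
  next
    case False
    then have "s < r" using rs by auto
    show False by (rule final_real[OF s0 \<open>s < r\<close> F2])
  qed
qed



lemma no_embed_lp:
  assumes "1 \<le> r" "1 \<le> s" "r \<noteq> s"
    and E: "invertible_op (Defs.dsum (lp_space s) (trivial_space :: 'c cnspace)) (Defs.dsum (lp_space r) Z) E"
    and Z: "complex_banach (Z :: 'c cnspace)"
  shows False
proof -
  have nn: "\<And>x. 0 \<le> vnorm (lp_space t) x" for t by (simp add: lp_simps Ns_nonneg)
  from retract[OF E Z nn nn] obtain A C D where
    "\<forall>x\<in>Ls r. A x \<in> Ls s"
    "\<forall>x\<in>Ls r. \<forall>y\<in>Ls r. A (\<lambda>n. x n + y n) = (\<lambda>n. A x n + A y n)"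
    "\<forall>c. \<forall>x\<in>Ls r. A (\<lambda>n. c * x n) = (\<lambda>n. c * A x n)"
    "\<forall>x\<in>Ls r. Ns s (A x) \<le> C * Ns r x"
    "\<forall>x\<in>Ls r. Ns r x \<le> D * Ns s (A x)"
    unfolding lp_simps by blast
  from no_embed[OF assms(1-3) this] show False .
qed

theorem corollary4p4:
  fixes p q :: real
    and T :: "(nat \<Rightarrow> complex) \<Rightarrow> (nat \<Rightarrow> complex)"
    and S :: "(nat \<Rightarrow> complex) \<Rightarrow> (nat \<Rightarrow> complex)"
  assumes "1 \<le> p" and "1 \<le> q" and "p \<noteq> q"
    and "invertible_op (lp_space p) (lp_space p) T"
    and "invertible_op (lp_space q) (lp_space q) S"
  shows "equiv_after_ext TYPE(nat \<Rightarrow> complex) TYPE(nat \<Rightarrow> complex)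
           (lp_space p) (lp_space q) T S
         \<and> \<not> equiv_after_one_sided_ext TYPE('c) (lp_space p) (lp_space q) T S"
proof
  show "equiv_after_ext TYPE(nat \<Rightarrow> complex) TYPE(nat \<Rightarrow> complex) (lp_space p) (lp_space q) T S"
    unfolding equiv_after_ext_def
    using lp_banach[OF assms(2)] lp_banach[OF assms(1)] positive_part[OF assms(1,2,4,5)] by blast
  show "\<not> equiv_after_one_sided_ext TYPE('c) (lp_space p) (lp_space q) T S"
  proof
    assume "equiv_after_one_sided_ext TYPE('c) (lp_space p) (lp_space q) T S"
    then consider
      (a) X' where "complex_banach (X' :: 'c cnspace)" "equiv_ext_with (lp_space p) (lp_space q) X' (trivial_space :: 'c cnspace) T S"
    | (b) Y' where "complex_banach (Y' :: 'c cnspace)" "equiv_ext_with (lp_space p) (lp_space q) (trivial_space :: 'c cnspace) Y' T S"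
      unfolding equiv_after_one_sided_ext_def by blast
    then show False
    proof cases
      case a
      then obtain E where E: "invertible_op (Defs.dsum (lp_space q) (trivial_space :: 'c cnspace)) (Defs.dsum (lp_space p) X') E"
        unfolding equiv_ext_with_def by blast
      show False using no_embed_lp[OF assms(1,2,3) E a(1)] .
    next
      case b
      then obtain F where F: "invertible_op (Defs.dsum (lp_space p) (trivial_space :: 'c cnspace)) (Defs.dsum (lp_space q) Y') F"
        unfolding equiv_ext_with_def by blast
      show False using no_embed_lp[OF assms(2,1) _ F b(1)] assms(3) by auto
    qed
  qed
qed

end
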